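(* Let $d\in\mathbf{N}$, let $A$ be a symmetric $(d+1)\times(d+1)$ matrix with rational entries, let $\Delta_d=\{x\in\mathbf{R}^{d+1}: \sum_{i=1}^{d+1}x_i=1,\ x_i\ge0\ \forall i\}$ with relative interior $\Delta_d^o=\{x\in\Delta_d: x_i>0\ \forall i\}$, and define $f:\Delta_d\to\mathbf{R}$ by $f(x)=\frac12x^TAx$. (a) $f$ attains its maximum and its minimum on $\Delta_d$ at points whose entries are all rational. (b) If there is $x\in\Delta_d^o$ with $f(x)=M:=\max_{\Delta_d}f$, then there is $x'\in\Delta_d^o$ with all entries rational and $f(x')=M$. The same holds with the maximum replaced by the minimum. *)

theory Defs
  imports Complex_Main
begin

text \<open>Vectors in R^(d+1) are functions nat => real, coordinates indexed by 0..d,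
  and coordinates beyond d are required to be 0 (extensional convention).\<close>

definition std_simplex :: "nat \<Rightarrow> (nat \<Rightarrow> real) set" where
  "std_simplex d = {x. (\<Sum>i\<le>d. x i) = 1 \<and> (\<forall>i\<le>d. 0 \<le> x i) \<and> (\<forall>i>d. x i = 0)}"

definition std_simplex_relint :: "nat \<Rightarrow> (nat \<Rightarrow> real) set" where
  "std_simplex_relint d = {x \<in> std_simplex d. \<forall>i\<le>d. 0 < x i}"

definition quad_form :: "nat \<Rightarrow> (nat \<Rightarrow> nat \<Rightarrow> rat) \<Rightarrow> (nat \<Rightarrow> real) \<Rightarrow> real" where
  "quad_form d A x = (1/2) * (\<Sum>i\<le>d. \<Sum>j\<le>d. x i * of_rat (A i j) * x j)"

definition rational_vec :: "(nat \<Rightarrow> real) \<Rightarrow> bool" where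
  "rational_vec x \<longleftrightarrow> (\<forall>i. x i \<in> \<rat>)"

end

theory Submission imports Defs "HOL-Analysis.Analysis" begin

definition bil :: "nat \<Rightarrow> (nat \<Rightarrow> nat \<Rightarrow> rat) \<Rightarrow> (nat \<Rightarrow> real) \<Rightarrow> (nat \<Rightarrow> real) \<Rightarrow> real" where
  "bil d A u v = (\<Sum>i\<le>d. \<Sum>j\<le>d. u i * of_rat (A i j) * v j)"

definition row :: "nat \<Rightarrow> (nat \<Rightarrow> nat \<Rightarrow> rat) \<Rightarrow> (nat \<Rightarrow> real) \<Rightarrow> nat \<Rightarrow> real" where
  "row d A v i = (\<Sum>j\<le>d. of_rat (A i j) * v j)"

lemma qf_bil: "quad_form d A x = bil d A x x / 2"
  by (simp add: quad_form_def bil_def)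

lemma bil_row: "bil d A u v = (\<Sum>i\<le>d. u i * row d A v i)"
  by (simp add: bil_def row_def sum_distrib_left mult.assoc)

lemma bil_sym:
  assumes symm: "\<forall>i\<le>d. \<forall>j\<le>d. A i j = A j i"
  shows "bil d A u v = bil d A v u"
proof -
  have "bil d A u v = (\<Sum>i\<le>d. \<Sum>j\<le>d. v j * of_rat (A j i) * u i)"
    unfolding bil_def by (intro sum.cong refl) (simp add: symm mult.commute)
  also have "\<dots> = bil d A v u" unfolding bil_def by (rule sum.swap)
  finally show ?thesis .
qed

lemma bil_expand:
  "bil d A (\<lambda>i. x i + t * w i) (\<lambda>i. x i + t * w i) =
     bil d A x x + t * bil d A w x + t * bil d A x w + t^2 * bil d A w w"
proof -
  have "bil d A (\<lambda>i. x i + t * w i) (\<lambda>i. x i + t * w i) =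
    (\<Sum>i\<le>d. \<Sum>j\<le>d. x i * of_rat (A i j) * x j + t * (w i * of_rat (A i j) * x j)
       + t * (x i * of_rat (A i j) * w j) + t^2 * (w i * of_rat (A i j) * w j))"
    unfolding bil_def by (intro sum.cong refl) (simp add: algebra_simps power2_eq_square)
  then show ?thesis
    by (simp add: bil_def sum.distrib sum_distrib_left)
qed

lemma bil_diff:
  "bil d A (\<lambda>i. y i - x i) (\<lambda>i. y i + x i) = bil d A y y + bil d A y x - bil d A x y - bil d A x x"
proof -
  have "bil d A (\<lambda>i. y i - x i) (\<lambda>i. y i + x i) =
    (\<Sum>i\<le>d. \<Sum>j\<le>d. y i * of_rat (A i j) * y j + y i * of_rat (A i j) * x j
       - x i * of_rat (A i j) * y j - x i * of_rat (A i j) * x j)"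
    unfolding bil_def by (intro sum.cong refl) (simp add: algebra_simps)
  then show ?thesis
    by (simp add: bil_def sum.distrib sum_subtractf)
qed

lemma qf_neg: "quad_form d (\<lambda>i j. - A i j) y = - quad_form d A y"
  by (simp add: quad_form_def of_rat_minus sum_negf)

lemma kkt:
  assumes symm: "\<forall>i\<le>d. \<forall>j\<le>d. A i j = A j i"
    and x: "x \<in> std_simplex d" and mx: "\<forall>y\<in>std_simplex d. quad_form d A y \<le> quad_form d A x"
    and ij: "i \<le> d" "j \<le> d" "0 < x i" "0 < x j"
  shows "row d A x i = row d A x j"
proof (cases "i = j")
  case True then show ?thesis by simp
next
  case False
  define w where "w = (\<lambda>k. (if k = i then 1 else 0) - (if k = j then 1 else (0::real)))"
  define g where "g = row d A x i - row d A x j"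
  define c where "c = bil d A w w"
  define m where "m = min (x i) (x j)"
  have m0: "m > 0" using ij by (simp add: m_def)
  have bwx: "bil d A w x = g"
  proof -
    have "\<And>k. w k * row d A x k = (if k = i then row d A x k else 0) - (if k = j then row d A x k else 0)"
      by (simp add: w_def left_diff_distrib)
    then have "bil d A w x = (\<Sum>k\<le>d. (if k = i then row d A x k else 0)) - (\<Sum>k\<le>d. (if k = j then row d A x k else 0))"
      unfolding bil_row by (simp add: sum_subtractf)
    then show ?thesis using ij by (simp add: g_def)
  qed
  have ineq: "t * g + t^2 * c / 2 \<le> 0" if t: "\<bar>t\<bar> \<le> m" for t
  proof -
    define y where "y = (\<lambda>k. x k + t * w k)"
    have sw: "(\<Sum>k\<le>d. w k) = 0" unfolding w_def using ij
      by (simp add: sum_subtractf)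
    have "y \<in> std_simplex d"
    proof -
      have "(\<Sum>k\<le>d. y k) = 1" using x sw
        by (simp add: y_def sum.distrib std_simplex_def sum_distrib_left[symmetric])
      moreover have "0 \<le> y k" if "k \<le> d" for k
      proof -
        have "0 \<le> x k" using x that by (simp add: std_simplex_def)
        consider "k = i" | "k = j" | "k \<noteq> i" "k \<noteq> j" by blast
        then show ?thesis
        proof cases
          case 1 then show ?thesis using t False unfolding y_def w_def m_def by (simp add: abs_le_iff)
        next
          case 2 then show ?thesis using t False unfolding y_def w_def m_def by (simp add: abs_le_iff)
        next
          case 3 then show ?thesis using \<open>0 \<le> x k\<close> unfolding y_def w_def by simp
        qed
      qed
      moreover have "y k = 0" if "k > d" for k
        using x that ij by (simp add: y_def w_def std_simplex_def)
      ultimately show ?thesis by (simp add: std_simplex_def)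
    qed
    then have "quad_form d A y \<le> quad_form d A x" using mx by blast
    moreover have "quad_form d A y = quad_form d A x + t * g + t^2 * c / 2"
      unfolding qf_bil y_def bil_expand using bil_sym[OF symm, of x w] bwx
      by (simp add: c_def field_simps)
    ultimately show ?thesis by simp
  qed
  show ?thesis
  proof (rule ccontr)
    assume "row d A x i \<noteq> row d A x j"
    then have g0: "g \<noteq> 0" by (simp add: g_def)
    define \<delta> where "\<delta> = min (m / \<bar>g\<bar>) (1 / (\<bar>c\<bar> + 1))"
    have d0: "\<delta> > 0" using m0 g0 by (simp add: \<delta>_def)
    have "\<bar>\<delta> * g\<bar> \<le> m"
    proof -
      have "\<delta> \<le> m / \<bar>g\<bar>" by (simp add: \<delta>_def)
      then have "\<delta> * \<bar>g\<bar> \<le> m" using g0 by (simp add: field_simps)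
      then show ?thesis using d0 by (simp add: abs_mult)
    qed
    from ineq[OF this] have le: "\<delta> * g * g + \<delta>^2 * g^2 * c / 2 \<le> 0"
      by (simp add: power_mult_distrib mult.assoc)
    have "\<delta> * \<bar>c\<bar> < 1"
    proof -
      have "\<delta> \<le> 1 / (\<bar>c\<bar> + 1)" by (simp add: \<delta>_def)
      then have "\<delta> * (\<bar>c\<bar> + 1) \<le> 1" by (simp add: field_simps)
      then show ?thesis using d0 by (simp add: algebra_simps)
    qed
    then have "1 + \<delta> * c / 2 > 0" 
    proof -
      have "\<delta> * (- c) \<le> \<delta> * \<bar>c\<bar>" using d0 by (intro mult_left_mono) auto
      then show ?thesis using \<open>\<delta> * \<bar>c\<bar> < 1\<close> by simp
    qed
    moreover have "\<delta> * g^2 > 0" using d0 g0 by simp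
    ultimately have "(\<delta> * g^2) * (1 + \<delta> * c / 2) > 0" by simp
    moreover have "(\<delta> * g^2) * (1 + \<delta> * c / 2) = \<delta> * g * g + \<delta>^2 * g^2 * c / 2"
      by (simp add: algebra_simps power2_eq_square)
    ultimately show False using le by simp
  qed
qed


lemma rat_approx:
  fixes n :: nat and E :: "((nat \<Rightarrow> real) \<times> real) set"
  assumes "\<forall>(a,b)\<in>E. (\<forall>i. a i \<in> \<rat>) \<and> b \<in> \<rat> \<and> (\<Sum>i<n. a i * x i) = b"
    and "e > 0"
  shows "\<exists>y. (\<forall>i<n. y i \<in> \<rat> \<and> \<bar>y i - x i\<bar> < e) \<and> (\<forall>(a,b)\<in>E. (\<Sum>i<n. a i * y i) = b)"
  using assms
proof (induction n arbitrary: E e)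
  case 0
  then show ?case by auto
next
  case (Suc n)
  show ?case
  proof (cases "\<forall>(a,b)\<in>E. a n = 0")
    case True
    have "\<forall>(a,b)\<in>E. (\<forall>i. a i \<in> \<rat>) \<and> b \<in> \<rat> \<and> (\<Sum>i<n. a i * x i) = b"
    proof clarify
      fix a b assume "(a, b) \<in> E"
      then show "(\<forall>i. a i \<in> \<rat>) \<and> b \<in> \<rat> \<and> (\<Sum>i<n. a i * x i) = b"
        using Suc.prems(1) True by fastforce
    qed
    from Suc.IH[OF this Suc.prems(2)] obtain y where
      y: "\<forall>i<n. y i \<in> \<rat> \<and> \<bar>y i - x i\<bar> < e" "\<forall>(a,b)\<in>E. (\<Sum>i<n. a i * y i) = b" by blast
    obtain q where q: "q \<in> \<rat>" "x n - e < q" "q < x n + e"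
      using Rats_dense_in_real[of "x n - e" "x n + e"] Suc.prems(2) by auto
    show ?thesis
    proof (intro exI[of _ "y(n := q)"] conjI)
      show "\<forall>i<Suc n. (y(n := q)) i \<in> \<rat> \<and> \<bar>(y(n := q)) i - x i\<bar> < e"
        using y(1) q by (auto simp: less_Suc_eq)
      show "\<forall>(a,b)\<in>E. (\<Sum>i<Suc n. a i * (y(n := q)) i) = b"
      proof clarify
        fix a b assume "(a, b) \<in> E"
        then show "(\<Sum>i<Suc n. a i * (y(n := q)) i) = b"
          using y(2) True by fastforce
      qed
    qed
  next
    case False
    then obtain a0 b0 where ab0: "(a0, b0) \<in> E" "a0 n \<noteq> 0" by auto
    have a0q: "\<forall>i. a0 i \<in> \<rat>" "b0 \<in> \<rat>" and a0x: "(\<Sum>i<n. a0 i * x i) + a0 n * x n = b0"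
      using Suc.prems(1) ab0(1) by auto
    define sub where "sub = (\<lambda>(a::nat\<Rightarrow>real, b::real). ((\<lambda>i. a i - a n / a0 n * a0 i), b - a n / a0 n * b0))"
    define E' where "E' = sub ` E"
    have key: "(\<forall>i. a i - a n / a0 n * a0 i \<in> \<rat>) \<and> b - a n / a0 n * b0 \<in> \<rat> \<and>
          (\<Sum>i<n. (a i - a n / a0 n * a0 i) * x i) = b - a n / a0 n * b0" if ab: "(a, b) \<in> E" for a b
    proof -
      have aq: "\<forall>i. a i \<in> \<rat>" "b \<in> \<rat>" and ax: "(\<Sum>i<n. a i * x i) + a n * x n = b"
        using Suc.prems(1) ab by auto
      show "(\<forall>i. a i - a n / a0 n * a0 i \<in> \<rat>) \<and> b - a n / a0 n * b0 \<in> \<rat> \<and>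
          (\<Sum>i<n. (a i - a n / a0 n * a0 i) * x i) = b - a n / a0 n * b0"
      proof (intro conjI allI)
        fix i show "a i - a n / a0 n * a0 i \<in> \<rat>" using aq a0q by auto
      next
        show "b - a n / a0 n * b0 \<in> \<rat>" using aq a0q by auto
      next
        have "(\<Sum>i<n. (a i - a n / a0 n * a0 i) * x i) = (\<Sum>i<n. a i * x i) - a n / a0 n * (\<Sum>i<n. a0 i * x i)"
          by (simp add: left_diff_distrib sum_subtractf sum_distrib_left mult.assoc)
        also have "\<dots> = (b - a n * x n) - a n / a0 n * (b0 - a0 n * x n)"
        proof -
          have "(\<Sum>i<n. a i * x i) = b - a n * x n" "(\<Sum>i<n. a0 i * x i) = b0 - a0 n * x n"
            using ax a0x by linarith+
          then show ?thesis by simp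
        qed
        also have "\<dots> = b - a n / a0 n * b0" using ab0(2) by (simp add: field_simps)
        finally show "(\<Sum>i<n. (a i - a n / a0 n * a0 i) * x i) = b - a n / a0 n * b0" .
      qed
    qed
    have E'ok: "\<forall>(a,b)\<in>E'. (\<forall>i. a i \<in> \<rat>) \<and> b \<in> \<rat> \<and> (\<Sum>i<n. a i * x i) = b"
    proof (rule ballI)
      fix p assume "p \<in> E'"
      then obtain a b where ab: "(a,b) \<in> E" and p: "p = sub (a,b)" unfolding E'_def by auto
      show "case p of (a,b) \<Rightarrow> (\<forall>i. a i \<in> \<rat>) \<and> b \<in> \<rat> \<and> (\<Sum>i<n. a i * x i) = b"
        using key[OF ab] by (simp add: p sub_def)
    qed
    define C where "C = (\<Sum>i<n. \<bar>a0 i\<bar>) / \<bar>a0 n\<bar>"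
    have C0: "C \<ge> 0" by (simp add: C_def)
    define e' where "e' = e / (C + 1)"
    have e'0: "e' > 0" using C0 Suc.prems(2) by (simp add: e'_def)
    have e'e: "e' \<le> e" using C0 Suc.prems(2) by (simp add: e'_def field_simps)
    have Ce': "C * e' < e" using C0 Suc.prems(2) by (simp add: e'_def field_simps)
    obtain y where
      y: "\<forall>i<n. y i \<in> \<rat> \<and> \<bar>y i - x i\<bar> < e'" "\<forall>(a,b)\<in>E'. (\<Sum>i<n. a i * y i) = b"
      using Suc.IH[OF E'ok e'0] by blast
    define q where "q = (b0 - (\<Sum>i<n. a0 i * y i)) / a0 n"
    have xn: "x n = (b0 - (\<Sum>i<n. a0 i * x i)) / a0 n" using a0x ab0(2) by (simp add: field_simps)
    have "q \<in> \<rat>" unfolding q_def using a0q y(1)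
      by (intro Rats_divide Rats_diff Rats_sum Rats_mult) auto
    have "\<bar>q - x n\<bar> = \<bar>(\<Sum>i<n. a0 i * (y i - x i))\<bar> / \<bar>a0 n\<bar>"
      unfolding q_def xn using ab0(2)
      by (simp add: diff_divide_distrib[symmetric] abs_divide right_diff_distrib sum_subtractf abs_minus_commute)
    also have "\<dots> \<le> (\<Sum>i<n. \<bar>a0 i\<bar> * e') / \<bar>a0 n\<bar>"
    proof (intro divide_right_mono order.trans[OF sum_abs] sum_mono)
      fix i assume "i \<in> {..<n}"
      then have "\<bar>y i - x i\<bar> \<le> e'" using y(1) by (simp add: less_imp_le)
      then show "\<bar>a0 i * (y i - x i)\<bar> \<le> \<bar>a0 i\<bar> * e'"
        unfolding abs_mult by (rule mult_left_mono) simp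
    qed simp
    also have "\<dots> = C * e'" by (simp add: C_def sum_distrib_right[symmetric])
    finally have qx: "\<bar>q - x n\<bar> < e" using Ce' by linarith
    show ?thesis
    proof (intro exI[of _ "y(n := q)"] conjI)
      show "\<forall>i<Suc n. (y(n := q)) i \<in> \<rat> \<and> \<bar>(y(n := q)) i - x i\<bar> < e"
        using y(1) \<open>q \<in> \<rat>\<close> qx e'e by (auto simp: less_Suc_eq)
      show "\<forall>(a,b)\<in>E. (\<Sum>i<Suc n. a i * (y(n := q)) i) = b"
      proof clarify
        fix a b assume ab: "(a, b) \<in> E"
        then have "sub (a, b) \<in> E'" by (simp add: E'_def)
        then have "case sub (a,b) of (a,b) \<Rightarrow> (\<Sum>i<n. a i * y i) = b"
          by (rule bspec[OF y(2)])
        then have "(\<Sum>i<n. (a i - a n / a0 n * a0 i) * y i) = b - a n / a0 n * b0"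
          by (simp add: sub_def)
        then have "(\<Sum>i<n. a i * y i) - a n / a0 n * (\<Sum>i<n. a0 i * y i) = b - a n / a0 n * b0"
          by (simp add: left_diff_distrib sum_subtractf sum_distrib_left mult.assoc)
        moreover have "a n * q = a n / a0 n * (b0 - (\<Sum>i<n. a0 i * y i))"
          by (simp add: q_def)
        ultimately have "(\<Sum>i<n. a i * y i) + a n * q = b" by (simp add: algebra_simps)
        then show "(\<Sum>i<Suc n. a i * (y(n := q)) i) = b" by simp
      qed
    qed
  qed
qed


lemma cont_coord: "continuous_on S (\<lambda>x::nat\<Rightarrow>real. x i)"
  by (rule continuous_on_subset[OF continuous_on_product_coordinates]) simp

lemma cont_qf: "continuous_on S (quad_form d A)"
  unfolding quad_form_def
  by (intro continuous_intros cont_coord)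

lemma compact_simplex: "compact (std_simplex d)"
proof -
  define S where "S = (\<lambda>i::nat. if i \<le> d then {0..1::real} else {0})"
  have "compactin (product_topology (\<lambda>i. euclidean) UNIV) (PiE UNIV S)"
    by (subst compactin_PiE) (auto simp: S_def)
  then have c: "compact (PiE UNIV S)"
    by (simp add: euclidean_product_topology)
  have cl: "closed {x::nat\<Rightarrow>real. (\<Sum>i\<le>d. x i) = 1}"
    by (intro closed_Collect_eq continuous_intros cont_coord)
  have "std_simplex d = PiE UNIV S \<inter> {x. (\<Sum>i\<le>d. x i) = 1}"
  proof (rule set_eqI, rule iffI)
    fix x assume x: "x \<in> std_simplex d"
    then have "x i \<le> 1" if "i \<le> d" for i
    proof -
      have "x i \<le> (\<Sum>j\<le>d. x j)" using x that
        by (intro member_le_sum) (auto simp: std_simplex_def)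
      then show ?thesis using x by (simp add: std_simplex_def)
    qed
    then show "x \<in> PiE UNIV S \<inter> {x. (\<Sum>i\<le>d. x i) = 1}"
      using x by (auto simp: std_simplex_def S_def PiE_iff)
  next
    fix x assume "x \<in> PiE UNIV S \<inter> {x. (\<Sum>i\<le>d. x i) = 1}"
    then have a: "\<And>i. x i \<in> S i" and b: "(\<Sum>i\<le>d. x i) = 1" by (auto simp: PiE_iff)
    have "0 \<le> x i" if "i \<le> d" for i using a[of i] that by (simp add: S_def)
    moreover have "x i = 0" if "i > d" for i using a[of i] that by (simp add: S_def)
    ultimately show "x \<in> std_simplex d" using b by (simp add: std_simplex_def)
  qed
  then show ?thesis using compact_Int_closed[OF c cl] by simp
qed


lemma core:
  assumes symm: "\<forall>i\<le>d. \<forall>j\<le>d. A i j = A j i"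
    and x: "x \<in> std_simplex d" and mx: "\<forall>y\<in>std_simplex d. quad_form d A y \<le> quad_form d A x"
  shows "\<exists>x'\<in>std_simplex d. rational_vec x' \<and> quad_form d A x' = quad_form d A x \<and>
           (\<forall>i\<le>d. 0 < x i \<longrightarrow> 0 < x' i)"
proof -
  define S where "S = {i. i \<le> d \<and> 0 < x i}"
  have xnn: "\<And>i. i \<le> d \<Longrightarrow> 0 \<le> x i" and xs: "(\<Sum>i\<le>d. x i) = 1"
    and xo: "\<And>i. i > d \<Longrightarrow> x i = 0"
    using x by (auto simp: std_simplex_def)
  have "S \<noteq> {}"
  proof
    assume "S = {}"
    then have "\<And>i. i \<le> d \<Longrightarrow> x i = 0" using xnn by (force simp: S_def)
    then have "(\<Sum>i\<le>d. x i) = 0" by simp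
    then show False using xs by simp
  qed
  then obtain i0 where i0: "i0 \<in> S" by blast
  have finS: "finite S" by (simp add: S_def)
  define E1 where "E1 = {((\<lambda>k::nat. 1::real), 1::real)}"
  define E2 where "E2 = {((\<lambda>k::nat. if k = i then 1 else 0::real), 0::real) | i. i \<le> d \<and> x i = 0}"
  define E3 where "E3 = {((\<lambda>k::nat. of_rat (A i k) - of_rat (A j k) :: real), 0::real) | i j. i \<in> S \<and> j \<in> S}"
  define E where "E = E1 \<union> E2 \<union> E3"
  have sumS: "\<And>f. (\<Sum>k<Suc d. f k) = (\<Sum>k\<le>d. f k)" by (simp add: lessThan_Suc_atMost)
  have Eok: "\<forall>(a,b)\<in>E. (\<forall>i. a i \<in> \<rat>) \<and> b \<in> \<rat> \<and> (\<Sum>i<Suc d. a i * x i) = b"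
  proof (rule ballI)
    fix p assume "p \<in> E"
    then consider "p \<in> E1" | "p \<in> E2" | "p \<in> E3" unfolding E_def by blast
    then show "case p of (a,b) \<Rightarrow> (\<forall>i. a i \<in> \<rat>) \<and> b \<in> \<rat> \<and> (\<Sum>i<Suc d. a i * x i) = b"
    proof cases
      case 1 then show ?thesis using xs by (simp add: E1_def lessThan_Suc_atMost del: sum.lessThan_Suc)
    next
      case 2
      then obtain i where p: "p = ((\<lambda>k::nat. if k = i then 1 else 0::real), 0::real)" "i \<le> d" "x i = 0"
        unfolding E2_def by blast
      have "(\<Sum>k<Suc d. (if k = i then 1 else 0) * x k) = (\<Sum>k<Suc d. if k = i then x k else 0)"
        by (intro sum.cong) auto
      also have "\<dots> = 0" using p by simp
      finally show ?thesis using p by simp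
    next
      case 3
      then obtain i j where p: "p = ((\<lambda>k::nat. of_rat (A i k) - of_rat (A j k) :: real), 0::real)"
        "i \<in> S" "j \<in> S" unfolding E3_def by blast
      have "row d A x i = row d A x j"
        using p(2,3) by (intro kkt[OF symm x mx]) (auto simp: S_def)
      then have "(\<Sum>k<Suc d. (of_rat (A i k) - of_rat (A j k)) * x k) = 0"
        by (simp add: lessThan_Suc_atMost row_def left_diff_distrib sum_subtractf del: sum.lessThan_Suc)
      then show ?thesis using p by simp
    qed
  qed
  define e where "e = Min (insert 1 (x ` S))"
  have e0: "e > 0" unfolding e_def using finS by (subst Min_gr_iff) (auto simp: S_def)
  have ex: "\<And>i. i \<in> S \<Longrightarrow> e \<le> x i" unfolding e_def using finS by (intro Min_le) auto
  obtain y where y: "\<forall>i<Suc d. y i \<in> \<rat> \<and> \<bar>y i - x i\<bar> < e" "\<forall>(a,b)\<in>E. (\<Sum>i<Suc d. a i * y i) = b"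
    using rat_approx[OF Eok e0] by blast
  define x' where "x' = (\<lambda>k. if k \<le> d then y k else 0)"
  have yE: "(\<Sum>i<Suc d. a i * y i) = b" if "(a,b) \<in> E" for a b
    using y(2) that by fastforce
  have pos: "0 < x' i" if "i \<in> S" for i
  proof -
    have "i \<le> d" using that by (simp add: S_def)
    then have "\<bar>y i - x i\<bar> < e" using y(1) by simp
    then show ?thesis using ex[OF that] \<open>i \<le> d\<close> by (simp add: x'_def)
  qed
  have zero: "x' i = 0" "x i = 0" if "i \<le> d" "i \<notin> S" for i
  proof -
    show xi: "x i = 0" using that xnn[of i] by (simp add: S_def)
    have "((\<lambda>k::nat. if k = i then 1 else 0::real), 0::real) \<in> E"
      using that xi unfolding E_def E2_def by blast
    from yE[OF this] have "(\<Sum>k<Suc d. (if k = i then 1 else 0) * y k) = 0" by simp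
    moreover have "(\<Sum>k<Suc d. (if k = i then 1 else 0) * y k) = (\<Sum>k<Suc d. if k = i then y k else 0)"
      by (intro sum.cong) auto
    moreover have "(\<Sum>k<Suc d. if k = i then y k else 0) = y i" using that(1)
      by (simp only: sum.delta finite_lessThan) simp
    ultimately show "x' i = 0" using that by (simp add: x'_def)
  qed
  have sum1: "(\<Sum>i\<le>d. x' i) = 1"
  proof -
    have "((\<lambda>k::nat. 1::real), 1::real) \<in> E" unfolding E_def E1_def by blast
    from yE[OF this] show ?thesis by (simp add: x'_def lessThan_Suc_atMost del: sum.lessThan_Suc)
  qed
  have x'S: "x' \<in> std_simplex d"
  proof -
    have "0 \<le> x' i" if "i \<le> d" for i
      using pos[of i] zero[of i] that by (cases "i \<in> S") auto
    then show ?thesis using sum1 by (simp add: std_simplex_def x'_def)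
  qed
  have rat: "rational_vec x'" unfolding rational_vec_def x'_def using y(1) by auto
  have rowy: "row d A x' i = row d A x' j" if "i \<in> S" "j \<in> S" for i j
  proof -
    have "((\<lambda>k::nat. of_rat (A i k) - of_rat (A j k) :: real), 0::real) \<in> E"
      using that unfolding E_def E3_def by blast
    from yE[OF this] have "(\<Sum>k\<le>d. (of_rat (A i k) - of_rat (A j k)) * x' k) = 0"
      by (simp add: lessThan_Suc_atMost x'_def del: sum.lessThan_Suc)
    then show ?thesis by (simp add: row_def left_diff_distrib sum_subtractf)
  qed
  have rowx: "row d A x i = row d A x j" if "i \<in> S" "j \<in> S" for i j
    using that by (intro kkt[OF symm x mx]) (auto simp: S_def)
  define K where "K = row d A x' i0 + row d A x i0"
  have "bil d A (\<lambda>i. x' i - x i) (\<lambda>i. x' i + x i) = (\<Sum>i\<le>d. (x' i - x i) * K)"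
    unfolding bil_row
  proof (intro sum.cong refl)
    fix i assume i: "i \<in> {..d}"
    have r: "row d A (\<lambda>i. x' i + x i) i = row d A x' i + row d A x i"
      by (simp add: row_def distrib_left sum.distrib)
    show "(x' i - x i) * row d A (\<lambda>i. x' i + x i) i = (x' i - x i) * K"
    proof (cases "i \<in> S")
      case True then show ?thesis using rowy[OF True i0] rowx[OF True i0] r by (simp add: K_def)
    next
      case False then show ?thesis using zero[of i] i by simp
    qed
  qed
  also have "\<dots> = 0" using sum1 xs by (simp add: sum_distrib_right[symmetric] sum_subtractf)
  finally have "bil d A x' x' = bil d A x x"
    using bil_sym[OF symm, of x' x] by (simp add: bil_diff)
  then have "quad_form d A x' = quad_form d A x" by (simp add: qf_bil)
  moreover have "\<forall>i\<le>d. 0 < x i \<longrightarrow> 0 < x' i" using pos by (simp add: S_def)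
  ultimately show ?thesis using x'S rat by blast
qed


lemma simplex_ne: "std_simplex d \<noteq> {}"
proof -
  have "(\<lambda>i::nat. if i = 0 then 1 else 0::real) \<in> std_simplex d"
    by (simp add: std_simplex_def)
  then show ?thesis by blast
qed

lemma relint_sub: "std_simplex_relint d \<subseteq> std_simplex d"
  by (auto simp: std_simplex_relint_def)

theorem lemma3p1:
  fixes d :: nat and A :: "nat \<Rightarrow> nat \<Rightarrow> rat"
  assumes symm: "\<forall>i\<le>d. \<forall>j\<le>d. A i j = A j i"
  defines "M \<equiv> (SUP y\<in>std_simplex d. quad_form d A y)"
      and "m \<equiv> (INF y\<in>std_simplex d. quad_form d A y)"
  shows "(\<exists>x\<in>std_simplex d. rational_vec x \<and> quad_form d A x = M \<and>
            (\<forall>y\<in>std_simplex d. quad_form d A y \<le> quad_form d A x))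
       \<and> (\<exists>x\<in>std_simplex d. rational_vec x \<and> quad_form d A x = m \<and>
            (\<forall>y\<in>std_simplex d. quad_form d A x \<le> quad_form d A y))
       \<and> ((\<exists>x\<in>std_simplex_relint d. quad_form d A x = M) \<longrightarrow>
            (\<exists>x'\<in>std_simplex_relint d. rational_vec x' \<and> quad_form d A x' = M))
       \<and> ((\<exists>x\<in>std_simplex_relint d. quad_form d A x = m) \<longrightarrow>
            (\<exists>x'\<in>std_simplex_relint d. rational_vec x' \<and> quad_form d A x' = m))"
proof -
  define B where "B = (\<lambda>i j. - A i j)"
  have symmB: "\<forall>i\<le>d. \<forall>j\<le>d. B i j = B j i" using symm by (simp add: B_def)
  have qB: "\<And>y. quad_form d B y = - quad_form d A y" by (simp add: B_def qf_neg)
  obtain xM where xM: "xM \<in> std_simplex d" "\<forall>y\<in>std_simplex d. quad_form d A y \<le> quad_form d A xM"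
    using continuous_attains_sup[OF compact_simplex simplex_ne cont_qf] by blast
  obtain xm where xm: "xm \<in> std_simplex d" "\<forall>y\<in>std_simplex d. quad_form d A xm \<le> quad_form d A y"
    using continuous_attains_inf[OF compact_simplex simplex_ne cont_qf] by blast
  have MxM: "M = quad_form d A xM" unfolding M_def
    by (rule cSup_eq_maximum) (use xM in auto)
  have mxm: "m = quad_form d A xm" unfolding m_def
    by (rule cInf_eq_minimum) (use xm in auto)
  have maxB: "\<forall>y\<in>std_simplex d. quad_form d B y \<le> quad_form d B x" 
    if "\<forall>y\<in>std_simplex d. quad_form d A x \<le> quad_form d A y" for x
    using that by (simp add: qB)
  have P1: "\<exists>x\<in>std_simplex d. rational_vec x \<and> quad_form d A x = M \<and>
            (\<forall>y\<in>std_simplex d. quad_form d A y \<le> quad_form d A x)"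
  proof -
    obtain x' where "x' \<in> std_simplex d" "rational_vec x'" "quad_form d A x' = quad_form d A xM"
      using core[OF symm xM] by blast
    then show ?thesis using xM MxM by (intro bexI[of _ x']) auto
  qed
  have P2: "\<exists>x\<in>std_simplex d. rational_vec x \<and> quad_form d A x = m \<and>
            (\<forall>y\<in>std_simplex d. quad_form d A x \<le> quad_form d A y)"
  proof -
    obtain x' where "x' \<in> std_simplex d" "rational_vec x'" "quad_form d B x' = quad_form d B xm"
      using core[OF symmB xm(1) maxB[OF xm(2)]] by blast
    then show ?thesis using xm mxm qB by (intro bexI[of _ x']) auto
  qed
  have P3: "\<exists>x'\<in>std_simplex_relint d. rational_vec x' \<and> quad_form d A x' = M"
    if "x \<in> std_simplex_relint d" "quad_form d A x = M" for x
  proof -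
    have xs: "x \<in> std_simplex d" using that relint_sub by blast
    have mx: "\<forall>y\<in>std_simplex d. quad_form d A y \<le> quad_form d A x" using xM MxM that by auto
    obtain x' where x': "x' \<in> std_simplex d" "rational_vec x'" "quad_form d A x' = quad_form d A x"
      "\<forall>i\<le>d. 0 < x i \<longrightarrow> 0 < x' i"
      using core[OF symm xs mx] by blast
    have "x' \<in> std_simplex_relint d" using x' that(1) by (auto simp: std_simplex_relint_def)
    then show ?thesis using x' that by blast
  qed
  have P4: "\<exists>x'\<in>std_simplex_relint d. rational_vec x' \<and> quad_form d A x' = m"
    if "x \<in> std_simplex_relint d" "quad_form d A x = m" for x
  proof -
    have xs: "x \<in> std_simplex d" using that relint_sub by blast
    have mx: "\<forall>y\<in>std_simplex d. quad_form d A x \<le> quad_form d A y" using xm mxm that by auto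
    obtain x' where x': "x' \<in> std_simplex d" "rational_vec x'" "quad_form d B x' = quad_form d B x"
      "\<forall>i\<le>d. 0 < x i \<longrightarrow> 0 < x' i"
      using core[OF symmB xs maxB[OF mx]] by blast
    have "x' \<in> std_simplex_relint d" using x' that(1) by (auto simp: std_simplex_relint_def)
    then show ?thesis using x' that qB by auto
  qed
  show ?thesis using P1 P2 P3 P4 by blast
qed

end
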